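(* Let $\lambda>0$ and $\mu=\nu>0$, and equip $S^3$ with the generalised Berger metric $g$ described in the context. For $\theta\in(0,\pi/2)$ let $T^2_\theta\subset S^3$ be the torus $\{(\cos\theta\, e^{i\alpha},\sin\theta\, e^{i\beta}):\alpha,\beta\in\mathbb R\}$, and let $H_g$ be its mean curvature vector in $(S^3,g)$. Then for every real number $C\ge 0$ there exists $\theta\in(0,\pi/2)$ such that the mean curvature of $T^2_\theta$ is constant with $\|H_g\|\equiv C$. For $C=0$ such a torus in this family is unique, and for $C>0$ there exist exactly two such tori in this family.
   Context: $S^3=\{(z,w)\in\mathbb C^2: |z|^2+|w|^2=1\}$ is a Lie group with multiplication $(z_1,w_1)\cdot(z_2,w_2)=(z_1z_2-\bar w_1w_2,\ \bar z_1w_2+w_1z_2)$ and inverse $(z,w)^{-1}=(\bar z,-w)$; the same formula defines $p\cdot v$ for $v\in\mathbb C^2$. Let $\langle (z_1,w_1),(z_2,w_2)\rangle=\mathrm{Re}(z_1\bar z_2+w_1\bar w_2)$. For $\lambda,\mu,\nu>0$ the left-invariant Riemannian metric $g$ is $g_p(A,B)=\lambda^2\langle p^{-1}A,(i,0)\rangle\langle p^{-1}B,(i,0)\rangle+\mu^2\langle p^{-1}A,(0,-1)\rangle\langle p^{-1}B,(0,-1)\rangle+\nu^2\langle p^{-1}A,(0,i)\rangle\langle p^{-1}B,(0,i)\rangle+\langle p^{-1}A,(1,0)\rangle\langle p^{-1}B,(1,0)\rangle$ for $A,B\in T_pS^3$. For a surface $T$ in $(S^3,g)$ with $g$-orthonormal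 tangent basis $V_1,V_2$ at $p$, the mean curvature vector is $H_g=\tfrac12(B(V_1,V_1)+B(V_2,V_2))$, where $B$ is the second fundamental form (normal component of the covariant derivative), and $\|H_g\|=\sqrt{g(H_g,H_g)}$. *)

theory Defs
  imports "HOL-Analysis.Analysis"
begin

type_synonym quat = "complex \<times> complex"

definition qmul :: "quat \<Rightarrow> quat \<Rightarrow> quat" where
  "qmul p q = (fst p * fst q - cnj (snd p) * snd q, cnj (fst p) * snd q + snd p * fst q)"

definition qinv :: "quat \<Rightarrow> quat" where
  "qinv p = (cnj (fst p), - snd p)"

definition qinner :: "quat \<Rightarrow> quat \<Rightarrow> real" where
  "qinner a b = Re (fst a * cnj (fst b) + snd a * cnj (snd b))"

definition S3 :: "quat set" where
  "S3 = {(z, w). (cmod z)^2 + (cmod w)^2 = 1}"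

definition berger_metric :: "real \<Rightarrow> real \<Rightarrow> real \<Rightarrow> quat \<Rightarrow> quat \<Rightarrow> quat \<Rightarrow> real" where
  "berger_metric la mu nu p A B =
      la^2 * qinner (qmul (qinv p) A) (\<i>, 0) * qinner (qmul (qinv p) B) (\<i>, 0)
    + mu^2 * qinner (qmul (qinv p) A) (0, -1) * qinner (qmul (qinv p) B) (0, -1)
    + nu^2 * qinner (qmul (qinv p) A) (0, \<i>) * qinner (qmul (qinv p) B) (0, \<i>)
    + qinner (qmul (qinv p) A) (1, 0) * qinner (qmul (qinv p) B) (1, 0)"

definition pd :: "(real^'n \<Rightarrow> 'b::real_normed_vector) \<Rightarrow> real^'n \<Rightarrow> 'n \<Rightarrow> 'b" where
  "pd f x k = vector_derivative (\<lambda>s. f (x + s *\<^sub>R axis k 1)) (at 0)"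

definition gcoord :: "(quat \<Rightarrow> quat \<Rightarrow> quat \<Rightarrow> real) \<Rightarrow> (real^3 \<Rightarrow> quat) \<Rightarrow> real^3 \<Rightarrow> 3 \<Rightarrow> 3 \<Rightarrow> real" where
  "gcoord G phi x i j = G (phi x) (pd phi x i) (pd phi x j)"

definition gmat :: "(quat \<Rightarrow> quat \<Rightarrow> quat \<Rightarrow> real) \<Rightarrow> (real^3 \<Rightarrow> quat) \<Rightarrow> real^3 \<Rightarrow> real^3^3" where
  "gmat G phi x = (\<chi> i j. gcoord G phi x i j)"

definition christoffel :: "(quat \<Rightarrow> quat \<Rightarrow> quat \<Rightarrow> real) \<Rightarrow> (real^3 \<Rightarrow> quat) \<Rightarrow> real^3 \<Rightarrow> 3 \<Rightarrow> 3 \<Rightarrow> 3 \<Rightarrow> real" where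
  "christoffel G phi x k i j = 1/2 * (\<Sum>l\<in>UNIV. matrix_inv (gmat G phi x) $ k $ l *
      (pd (\<lambda>y. gcoord G phi y j l) x i + pd (\<lambda>y. gcoord G phi y i l) x j
       - pd (\<lambda>y. gcoord G phi y i j) x l))"

definition push :: "(real^3 \<Rightarrow> quat) \<Rightarrow> real^3 \<Rightarrow> real^3 \<Rightarrow> quat" where
  "push phi x v = (\<Sum>k\<in>UNIV. (v $ k) *\<^sub>R pd phi x k)"

text \<open>A surface is given in chart coordinates by sg : R^2 -> R^3.  Its coordinate
  tangent fields at parameter y, pushed to C^2.\<close>
definition sframe :: "(real^3 \<Rightarrow> quat) \<Rightarrow> (real^2 \<Rightarrow> real^3) \<Rightarrow> real^2 \<Rightarrow> 2 \<Rightarrow> quat" where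
  "sframe phi sg y a = push phi (sg y) (pd sg y a)"

definition covd :: "(quat \<Rightarrow> quat \<Rightarrow> quat \<Rightarrow> real) \<Rightarrow> (real^3 \<Rightarrow> quat) \<Rightarrow> (real^2 \<Rightarrow> real^3) \<Rightarrow> real^2 \<Rightarrow> 2 \<Rightarrow> 2 \<Rightarrow> real^3" where
  "covd G phi sg y a b = (\<chi> k. pd (\<lambda>z. pd sg z b) y a $ k
      + (\<Sum>i\<in>UNIV. \<Sum>j\<in>UNIV. christoffel G phi (sg y) k i j * (pd sg y a $ i) * (pd sg y b $ j)))"

definition normal_part :: "(quat \<Rightarrow> quat \<Rightarrow> quat \<Rightarrow> real) \<Rightarrow> quat \<Rightarrow> (2 \<Rightarrow> quat) \<Rightarrow> quat \<Rightarrow> quat" where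
  "normal_part G p E Y = (THE N. (\<forall>a. G p N (E a) = 0) \<and> (\<exists>c::real^2. Y - N = (\<Sum>a\<in>UNIV. (c $ a) *\<^sub>R E a)))"

definition sff :: "(quat \<Rightarrow> quat \<Rightarrow> quat \<Rightarrow> real) \<Rightarrow> (real^3 \<Rightarrow> quat) \<Rightarrow> (real^2 \<Rightarrow> real^3) \<Rightarrow> real^2 \<Rightarrow> 2 \<Rightarrow> 2 \<Rightarrow> quat" where
  "sff G phi sg y a b = normal_part G (phi (sg y)) (sframe phi sg y)
      (push phi (sg y) (covd G phi sg y a b))"

text \<open>Mean curvature vector H = 1/2 (B(V1,V1) + B(V2,V2)) for tangent vectors
  V1 = sum c_a e_a, V2 = sum d_a e_a (B extended bilinearly).\<close>
definition mean_curv :: "(quat \<Rightarrow> quat \<Rightarrow> quat \<Rightarrow> real) \<Rightarrow> (real^3 \<Rightarrow> quat) \<Rightarrow> (real^2 \<Rightarrow> real^3) \<Rightarrow> real^2 \<Rightarrow> real^2 \<Rightarrow> real^2 \<Rightarrow> quat" where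
  "mean_curv G phi sg y c d = (1/2) *\<^sub>R (\<Sum>a\<in>UNIV. \<Sum>b\<in>UNIV.
      (c $ a * c $ b + d $ a * d $ b) *\<^sub>R sff G phi sg y a b)"

definition const_mean_curv_norm :: "(quat \<Rightarrow> quat \<Rightarrow> quat \<Rightarrow> real) \<Rightarrow> (real^3 \<Rightarrow> quat) \<Rightarrow> (real^2 \<Rightarrow> real^3) \<Rightarrow> real \<Rightarrow> bool" where
  "const_mean_curv_norm G phi sg C \<longleftrightarrow>
    (\<forall>y c d. let p = phi (sg y);
                 V1 = (\<Sum>a\<in>UNIV. (c $ a) *\<^sub>R sframe phi sg y a);
                 V2 = (\<Sum>a\<in>UNIV. (d $ a) *\<^sub>R sframe phi sg y a)
             in G p V1 V1 = 1 \<and> G p V2 V2 = 1 \<and> G p V1 V2 = 0 \<longrightarrow>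
                sqrt (G p (mean_curv G phi sg y c d) (mean_curv G phi sg y c d)) = C)"

text \<open>Chart (t, alpha, beta) |-> (cos t e^{i alpha}, sin t e^{i beta}) of S^3, a local
  diffeomorphism on (0, pi/2) x R x R.\<close>
definition hopf_chart :: "real^3 \<Rightarrow> quat" where
  "hopf_chart x = (complex_of_real (cos (x $ 1)) * cis (x $ 2), complex_of_real (sin (x $ 1)) * cis (x $ 3))"

definition torus_param :: "real \<Rightarrow> real^2 \<Rightarrow> real^3" where
  "torus_param theta y = vector [theta, y $ 1, y $ 2]"


end

theory Submission
  imports Defs
begin

lemma cis_eq_parts: "cis u = complex_of_real (cos u) + \<i> * complex_of_real (sin u)"
  by (simp add: complex_eq_iff)

lemma cis_vd: "((\<lambda>s. cis (a + s)) has_vector_derivative (\<i> * cis a)) (at 0)"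
proof -
  have "((\<lambda>s. complex_of_real (cos (a + s)) + \<i> * complex_of_real (sin (a + s))) has_vector_derivative
     (complex_of_real (- sin (a + 0) * 1) + \<i> * complex_of_real (cos (a+0) * 1))) (at 0)"
    by (rule derivative_eq_intros refl | simp)+
  moreover have "\<i> * cis a = \<i> * complex_of_real (cos a) - complex_of_real (sin a)"
    by (simp add: complex_eq_iff)
  ultimately show ?thesis unfolding cis_eq_parts[of "a + _"] by simp
qed

abbreviation "P1 x \<equiv> (- complex_of_real (sin (x$1)) * cis (x$2), complex_of_real (cos (x$1)) * cis (x$3))"
abbreviation "P2 x \<equiv> (\<i> * complex_of_real (cos (x$1)) * cis (x$2), 0::complex)"
abbreviation "P3 x \<equiv> (0::complex, \<i> * complex_of_real (sin (x$1)) * cis (x$3))"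

lemma pd_hopf1: "pd hopf_chart x 1 = P1 x"
proof -
  have e: "(\<lambda>s. hopf_chart (x + s *\<^sub>R axis 1 1)) = (\<lambda>s. (complex_of_real (cos (x$1 + s)) * cis (x$2), complex_of_real (sin (x$1+s)) * cis (x$3)))"
    by (auto simp: hopf_chart_def axis_def)
  have "((\<lambda>s. (complex_of_real (cos (x$1 + s)) * cis (x$2), complex_of_real (sin (x$1+s)) * cis (x$3))) has_vector_derivative
     (complex_of_real (cos (x$1 + 0)) * 0 + complex_of_real (- sin (x$1 + 0) * 1) * cis (x$2),
      complex_of_real (sin (x$1 + 0)) * 0 + complex_of_real (cos (x$1 + 0) * 1) * cis (x$3))) (at 0)"
    by (rule derivative_eq_intros refl | simp)+
  then show ?thesis unfolding pd_def e by (simp add: vector_derivative_at)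
qed

lemma pd_hopf2: "pd hopf_chart x 2 = P2 x"
proof -
  have e: "(\<lambda>s. hopf_chart (x + s *\<^sub>R axis 2 1)) = (\<lambda>s. (complex_of_real (cos (x$1)) * cis (x$2 + s), complex_of_real (sin (x$1)) * cis (x$3)))"
    by (auto simp: hopf_chart_def axis_def)
  have "((\<lambda>s. (complex_of_real (cos (x$1)) * cis (x$2 + s), complex_of_real (sin (x$1)) * cis (x$3))) has_vector_derivative
     (complex_of_real (cos (x$1)) * (\<i> * cis (x$2)) + 0 * cis (x$2 + 0),
      complex_of_real (sin (x$1)) * 0 + 0 * cis (x$3))) (at 0)"
    by (rule derivative_eq_intros cis_vd refl | simp)+
  then show ?thesis unfolding pd_def e by (simp add: vector_derivative_at mult_ac)
qed

lemma pd_hopf3: "pd hopf_chart x 3 = P3 x"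
proof -
  have e: "(\<lambda>s. hopf_chart (x + s *\<^sub>R axis 3 1)) = (\<lambda>s. (complex_of_real (cos (x$1)) * cis (x$2), complex_of_real (sin (x$1)) * cis (x$3 + s)))"
    by (auto simp: hopf_chart_def axis_def)
  have "((\<lambda>s. (complex_of_real (cos (x$1)) * cis (x$2), complex_of_real (sin (x$1)) * cis (x$3 + s))) has_vector_derivative
     (complex_of_real (cos (x$1)) * 0 + 0 * cis (x$2),
      complex_of_real (sin (x$1)) * (\<i> * cis (x$3)) + 0 * cis (x$3 + 0))) (at 0)"
    by (rule derivative_eq_intros cis_vd refl | simp)+
  then show ?thesis unfolding pd_def e by (simp add: vector_derivative_at mult_ac)
qed


lemma Qgen: "qmul (qinv (hopf_chart x)) (u,v) =
  (complex_of_real (cos (x$1)) * cnj (cis (x$2)) * u + complex_of_real (sin (x$1)) * cnj (cis (x$3)) * v,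
   complex_of_real (cos (x$1)) * cis (x$2) * v - complex_of_real (sin (x$1)) * cis (x$3) * u)"
  by (simp add: qmul_def qinv_def hopf_chart_def)

lemma cis_cnj_mult: "cis a * cnj (cis a) = 1"
  by (simp add: cis_cnj cis_mult)

lemma of_real_cs: "(complex_of_real (cos t))^2 + (complex_of_real (sin t))^2 = 1"
  by (metis of_real_1 of_real_add of_real_power sin_cos_squared_add2)

lemma Q1: "qmul (qinv (hopf_chart x)) (P1 x) = (0, cis (x$2 + x$3))"
proof -
  note h = cis_cnj_mult[of "x$2"] cis_cnj_mult[of "x$3"] of_real_cs[of "x$1"]
  show ?thesis unfolding Qgen cis_mult[symmetric] using h
    by (simp only: prod.inject, intro conjI; (algebra | simp add: algebra_simps))
qed

lemma Q2: "qmul (qinv (hopf_chart x)) (P2 x) = (\<i> * complex_of_real (cos (x$1)) ^ 2, - \<i> * complex_of_real (sin (x$1)) * complex_of_real (cos (x$1)) * cis (x$2 + x$3))"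
proof -
  note h = cis_cnj_mult[of "x$2"] cis_cnj_mult[of "x$3"] of_real_cs[of "x$1"]
  show ?thesis unfolding Qgen cis_mult[symmetric] using h
    by (simp only: prod.inject, intro conjI; (algebra | simp add: algebra_simps))
qed

lemma Q3: "qmul (qinv (hopf_chart x)) (P3 x) = (\<i> * complex_of_real (sin (x$1)) ^ 2, \<i> * complex_of_real (sin (x$1)) * complex_of_real (cos (x$1)) * cis (x$2 + x$3))"
proof -
  note h = cis_cnj_mult[of "x$2"] cis_cnj_mult[of "x$3"] of_real_cs[of "x$1"]
  show ?thesis unfolding Qgen cis_mult[symmetric] using h
    by (simp only: prod.inject, intro conjI; (algebra | simp add: algebra_simps))
qed

lemma berger_alt: "berger_metric la mu nu p A B =
   la^2 * Im (fst (qmul (qinv p) A)) * Im (fst (qmul (qinv p) B))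
 + mu^2 * Re (snd (qmul (qinv p) A)) * Re (snd (qmul (qinv p) B))
 + nu^2 * Im (snd (qmul (qinv p) A)) * Im (snd (qmul (qinv p) B))
 + Re (fst (qmul (qinv p) A)) * Re (fst (qmul (qinv p) B))"
  by (simp add: berger_metric_def qinner_def)

definition gfun :: "real \<Rightarrow> real \<Rightarrow> real \<Rightarrow> 3 \<Rightarrow> 3 \<Rightarrow> real" where
 "gfun la mu t i j = (if i = 1 then (if j = 1 then mu^2 else 0) else if j = 1 then 0
    else if i = 2 \<and> j = 2 then la^2 * cos t ^ 4 + mu^2 * sin t ^ 2 * cos t ^ 2
    else if i = 3 \<and> j = 3 then la^2 * sin t ^ 4 + mu^2 * sin t ^ 2 * cos t ^ 2
    else (la^2 - mu^2) * sin t ^ 2 * cos t ^ 2)"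

lemma pd_hopf: "pd hopf_chart x i = (if i = 1 then P1 x else if i = 2 then P2 x else P3 x)"
  using exhaust_3[of i] pd_hopf1 pd_hopf2 pd_hopf3 by auto

lemma QQ: "qmul (qinv (hopf_chart x)) (pd hopf_chart x i) = 
  (if i = 1 then (0, cis (x$2 + x$3)) else if i = 2 then (\<i> * complex_of_real (cos (x$1)) ^ 2, - \<i> * complex_of_real (sin (x$1)) * complex_of_real (cos (x$1)) * cis (x$2 + x$3))
   else (\<i> * complex_of_real (sin (x$1)) ^ 2, \<i> * complex_of_real (sin (x$1)) * complex_of_real (cos (x$1)) * cis (x$2 + x$3)))"
  using pd_hopf[of x i] Q1 Q2 Q3 by auto

lemma gcoord_eq: "gcoord (berger_metric la mu mu) hopf_chart x i j = gfun la mu (x$1) i j"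
proof -
  have h: "sin (x$2+x$3)^2 + cos (x$2+x$3)^2 = 1" by simp
  show ?thesis
  unfolding gcoord_def berger_alt QQ gfun_def
  using exhaust_3[of i] exhaust_3[of j]
  apply (elim disjE)
  apply (simp_all add: power2_eq_square[symmetric])
  apply (thin_tac "i = _", thin_tac "j = _", use h in algebra)+
  done
qed

definition gdfun :: "real \<Rightarrow> real \<Rightarrow> real \<Rightarrow> 3 \<Rightarrow> 3 \<Rightarrow> real" where
 "gdfun la mu t i j = (if i = 1 \<or> j = 1 then 0
    else if i = 2 \<and> j = 2 then - 4 * la^2 * cos t ^ 3 * sin t + mu^2 * (2 * sin t * cos t ^ 3 - 2 * sin t ^ 3 * cos t)
    else if i = 3 \<and> j = 3 then 4 * la^2 * sin t ^ 3 * cos t + mu^2 * (2 * sin t * cos t ^ 3 - 2 * sin t ^ 3 * cos t)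
    else (la^2 - mu^2) * (2 * sin t * cos t ^ 3 - 2 * sin t ^ 3 * cos t))"

lemma gfun_deriv: "((\<lambda>t. gfun la mu t i j) has_real_derivative gdfun la mu t i j) (at t)"
  using exhaust_3[of i] exhaust_3[of j]
  apply (elim disjE)
  apply (simp_all add: gfun_def gdfun_def)
  apply (auto intro!: derivative_eq_intros simp: eval_nat_numeral algebra_simps)
  done

lemma pd_gcoord: "pd (\<lambda>y. gcoord (berger_metric la mu mu) hopf_chart y i j) x k = (if k = 1 then gdfun la mu (x$1) i j else 0)"
proof -
  have e: "(\<lambda>s. gcoord (berger_metric la mu mu) hopf_chart (x + s *\<^sub>R axis k 1) i j)
     = (\<lambda>s. gfun la mu (x$1 + (if k = 1 then s else 0)) i j)"
    by (simp add: gcoord_eq axis_def)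
  show ?thesis
  proof (cases "k = 1")
    case True
    have "((\<lambda>s. gfun la mu (x$1 + s) i j) has_real_derivative gdfun la mu (x$1 + 0) i j * 1) (at 0)"
      by (rule DERIV_chain2[OF gfun_deriv]) (auto intro!: derivative_eq_intros)
    then show ?thesis unfolding pd_def e using True
      by (simp add: vector_derivative_at has_real_derivative_iff_has_vector_derivative)
  next
    case False
    then show ?thesis unfolding pd_def e
      by (simp add: vector_derivative_at)
  qed
qed

definition ginv :: "real \<Rightarrow> real \<Rightarrow> real \<Rightarrow> real^3^3" where
 "ginv la mu t = (let A = gfun la mu t 2 2; B = gfun la mu t 2 3; E = gfun la mu t 3 3; D = A * E - B^2 in
   \<chi> i j. if i = 1 then (if j = 1 then 1 / mu^2 else 0) else if j = 1 then 0
    else if i = 2 \<and> j = 2 then E / D else if i = 3 \<and> j = 3 then A / D else - B / D)"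

lemma detD: "gfun la mu t 2 2 * gfun la mu t 3 3 - (gfun la mu t 2 3)^2 = la^2 * mu^2 * sin t ^2 * cos t ^2"
proof -
  have h: "sin t ^2 + cos t ^2 = 1" by simp
  show ?thesis unfolding gfun_def apply simp using h by algebra
qed

lemma gmat_eq: "gmat (berger_metric la mu mu) hopf_chart x = (\<chi> i j. gfun la mu (x$1) i j)"
  by (simp add: gmat_def gcoord_eq)

lemma ginv_ok:
  assumes "mu \<noteq> 0" "gfun la mu t 2 2 * gfun la mu t 3 3 - (gfun la mu t 2 3)^2 \<noteq> 0"
  shows "(\<chi> i j. gfun la mu t i j) ** ginv la mu t = mat 1" "ginv la mu t ** (\<chi> i j. gfun la mu t i j) = mat 1"
proof -
  have sym: "gfun la mu t 3 2 = gfun la mu t 2 3" by (simp add: gfun_def)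
  have z: "gfun la mu t 1 1 = mu^2" "gfun la mu t 1 2 = 0" "gfun la mu t 1 3 = 0" "gfun la mu t 2 1 = 0" "gfun la mu t 3 1 = 0"
    by (simp_all add: gfun_def)
  define A where "A = gfun la mu t 2 2"
  define B where "B = gfun la mu t 2 3"
  define E where "E = gfun la mu t 3 3"
  have eq: "(A*E-B*B)*(A*E-B*B) = A * (A * (E * E)) + B * (B * (B * B)) - 2 * (A * (B * (B * E)))" by algebra
  have "(A*E-B*B)*(A*E-B*B) \<noteq> 0" using assms(2) unfolding A_def B_def E_def by (simp add: power2_eq_square)
  then have "A * (A * (E * E)) + B * (B * (B * B)) \<noteq> 2 * (A * (B * (B * E)))" unfolding eq by simp
  then have hh: "gfun la mu t 2 2 * (gfun la mu t 2 2 * (gfun la mu t 3 3 * gfun la mu t 3 3)) +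
        gfun la mu t 2 3 * (gfun la mu t 2 3 * (gfun la mu t 2 3 * gfun la mu t 2 3)) \<noteq>
        2 * (gfun la mu t 2 2 * (gfun la mu t 2 3 * (gfun la mu t 2 3 * gfun la mu t 3 3)))"
    unfolding A_def B_def E_def by simp
  show "(\<chi> i j. gfun la mu t i j) ** ginv la mu t = mat 1" "ginv la mu t ** (\<chi> i j. gfun la mu t i j) = mat 1"
    using assms hh
    by (simp_all add: matrix_matrix_mult_def mat_def vec_eq_iff forall_3 sum_3 ginv_def Let_def sym z field_simps power2_eq_square)
qed

lemma matrix_inv_eqI: fixes A :: "real^'n^'n" assumes "A ** B = mat 1" "B ** A = mat 1" shows "matrix_inv A = B"
proof -
  have ex: "\<exists>A'. A ** A' = mat 1 \<and> A' ** A = mat 1" using assms by blast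
  let ?M = "matrix_inv A"
  have M: "A ** ?M = mat 1 \<and> ?M ** A = mat 1" unfolding matrix_inv_def using someI_ex[OF ex] by blast
  have "?M = ?M ** (A ** B)" using assms by (simp add: matrix_mul_rid)
  also have "\<dots> = (?M ** A) ** B" by (simp add: matrix_mul_assoc)
  also have "\<dots> = B" using M by (simp add: matrix_mul_lid)
  finally show ?thesis .
qed

lemma matrix_inv_gmat:
  assumes "mu \<noteq> 0" "la \<noteq> 0" "sin (x$1) \<noteq> 0" "cos (x$1) \<noteq> 0"
  shows "matrix_inv (gmat (berger_metric la mu mu) hopf_chart x) = ginv la mu (x$1)"
  unfolding gmat_eq using assms
  by (intro matrix_inv_eqI ginv_ok) (simp_all add: detD)

lemma christ1:
  assumes "mu \<noteq> 0" "la \<noteq> 0" "sin (x$1) \<noteq> 0" "cos (x$1) \<noteq> 0"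
  shows "christoffel (berger_metric la mu mu) hopf_chart x 1 i j = - gdfun la mu (x$1) i j / (2 * mu^2)"
  unfolding christoffel_def matrix_inv_gmat[OF assms] pd_gcoord
  by (simp add: sum_3 ginv_def Let_def gdfun_def)

definition ix :: "2 \<Rightarrow> 3" where "ix a = (if a = 1 then 2 else 3)"

lemma torus_shift: "torus_param th (y + s *\<^sub>R axis a 1) = torus_param th y + s *\<^sub>R axis (ix a) 1"
  using exhaust_2[of a]
  by (auto simp: vec_eq_iff forall_3 torus_param_def axis_def ix_def)

lemma pd_torus: "pd (torus_param th) y a = axis (ix a) 1"
proof -
  have "((\<lambda>s. torus_param th y + s *\<^sub>R axis (ix a) 1) has_vector_derivative axis (ix a) 1) (at 0)"
    by (auto intro!: derivative_eq_intros)
  then show ?thesis unfolding pd_def torus_shift by (simp add: vector_derivative_at)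
qed

lemma pd_const: "pd (\<lambda>z. c) x k = 0"
  unfolding pd_def by (intro vector_derivative_at has_vector_derivative_const)

lemma pd_torus2: "pd (\<lambda>z. pd (torus_param th) z b) y a = 0"
proof -
  have e: "(\<lambda>z. pd (torus_param th) z b) = (\<lambda>z. axis (ix b) 1)" by (simp add: pd_torus)
  show ?thesis unfolding e by (rule pd_const)
qed

lemma torus1: "torus_param th y $ 1 = th"
  by (simp add: torus_param_def)

lemma covd1:
  assumes "mu \<noteq> 0" "la \<noteq> 0" "sin th \<noteq> 0" "cos th \<noteq> 0"
  shows "covd (berger_metric la mu mu) hopf_chart (torus_param th) y a b $ 1 = - gdfun la mu th (ix a) (ix b) / (2 * mu^2)"
  unfolding covd_def pd_torus2
  unfolding pd_torus
  using assms exhaust_2[of a] exhaust_2[of b]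
  by (auto simp: sum_3 axis_def christ1 torus1 ix_def)

lemma push_eq: "push phi x v = v$1 *\<^sub>R pd phi x 1 + v$2 *\<^sub>R pd phi x 2 + v$3 *\<^sub>R pd phi x 3"
  by (simp add: push_def sum_3)

lemma sframe_eq: "sframe phi (torus_param th) y a = pd phi (torus_param th y) (ix a)"
  unfolding sframe_def push_eq pd_torus using exhaust_2[of a]
  by (auto simp: axis_def ix_def)

lemma qmul_add: "qmul q (X + Y) = qmul q X + qmul q Y"
  by (simp add: qmul_def algebra_simps)
lemma qmul_diff: "qmul q (X - Y) = qmul q X - qmul q Y"
  by (simp add: qmul_def algebra_simps)
lemma qmul_scale: "qmul q (r *\<^sub>R X) = r *\<^sub>R qmul q X"
  by (simp add: qmul_def algebra_simps scaleR_conv_of_real)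
lemma qmul_zero: "qmul q 0 = 0"
  by (simp add: qmul_def zero_prod_def)

lemma bm_add1: "berger_metric la mu nu p (X + Y) Z = berger_metric la mu nu p X Z + berger_metric la mu nu p Y Z"
  by (simp add: berger_alt qmul_add algebra_simps)
lemma bm_diff1: "berger_metric la mu nu p (X - Y) Z = berger_metric la mu nu p X Z - berger_metric la mu nu p Y Z"
  by (simp add: berger_alt qmul_diff algebra_simps)
lemma bm_scale1: "berger_metric la mu nu p (r *\<^sub>R X) Z = r * berger_metric la mu nu p X Z"
  by (simp add: berger_alt qmul_scale algebra_simps)
lemma bm_sym: "berger_metric la mu nu p X Z = berger_metric la mu nu p Z X"
  by (simp add: berger_alt algebra_simps)
lemma bm_add2: "berger_metric la mu nu p Z (X + Y) = berger_metric la mu nu p Z X + berger_metric la mu nu p Z Y"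
  by (simp add: berger_alt qmul_add algebra_simps)
lemma bm_diff2: "berger_metric la mu nu p Z (X - Y) = berger_metric la mu nu p Z X - berger_metric la mu nu p Z Y"
  by (simp add: berger_alt qmul_diff algebra_simps)
lemma bm_scale2: "berger_metric la mu nu p Z (r *\<^sub>R X) = r * berger_metric la mu nu p Z X"
  by (simp add: berger_alt qmul_scale algebra_simps)

lemma qmul_inv_hopf: "qmul (hopf_chart x) (qmul (qinv (hopf_chart x)) D) = D"
proof -
  obtain u v where D: "D = (u, v)" by (cases D)
  note h = cis_cnj_mult[of "x$2"] cis_cnj_mult[of "x$3"] of_real_cs[of "x$1"]
  show ?thesis unfolding D Qgen using h
    by (simp add: qmul_def hopf_chart_def, intro conjI; algebra)
qed

lemma bm_posdef:
  assumes "la > 0" "mu > 0" "nu > 0" "berger_metric la mu nu (hopf_chart x) D D = 0"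
  shows "D = 0"
proof -
  obtain u v where uv: "qmul (qinv (hopf_chart x)) D = (u, v)" by (cases "qmul (qinv (hopf_chart x)) D")
  have "la^2 * Im u ^2 + mu^2 * Re v ^2 + nu^2 * Im v ^2 + Re u ^2 = 0"
    using assms(4) unfolding berger_alt uv by (simp add: power2_eq_square)
  moreover have "la^2 * Im u ^2 \<ge> 0" "mu^2 * Re v ^2 \<ge> 0" "nu^2 * Im v ^2 \<ge> 0" "Re u ^2 \<ge> 0" by auto
  ultimately have "la^2 * Im u ^2 = 0" "mu^2 * Re v ^2 = 0" "nu^2 * Im v ^2 = 0" "Re u ^2 = 0" by linarith+
  then have "u = 0" "v = 0" using assms by (auto simp: complex_eq_iff)
  then have "qmul (qinv (hopf_chart x)) D = 0" using uv by (simp add: zero_prod_def)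
  then show ?thesis using qmul_inv_hopf[of x D] by (simp add: qmul_zero)
qed

lemma gP: "berger_metric la mu mu (hopf_chart x) (pd hopf_chart x i) (pd hopf_chart x j) = gfun la mu (x$1) i j"
  using gcoord_eq[of la mu x i j] by (simp add: gcoord_def)

lemma normal_part_eq:
  assumes "la > 0" "mu > 0"
  shows "normal_part (berger_metric la mu mu) (hopf_chart x) (\<lambda>a. pd hopf_chart x (ix a))
     (v$1 *\<^sub>R pd hopf_chart x 1 + v$2 *\<^sub>R pd hopf_chart x 2 + v$3 *\<^sub>R pd hopf_chart x 3) = v$1 *\<^sub>R pd hopf_chart x 1"
proof -
  let ?G = "berger_metric la mu mu (hopf_chart x)"
  let ?P = "pd hopf_chart x"
  let ?Y = "v$1 *\<^sub>R ?P 1 + v$2 *\<^sub>R ?P 2 + v$3 *\<^sub>R ?P 3"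
  let ?N = "v$1 *\<^sub>R ?P 1"
  have orth: "?G ?N (?P (ix a)) = 0" for a
    using exhaust_2[of a] by (auto simp: bm_scale1 gP gfun_def ix_def)
  have span: "?Y - ?N = (\<Sum>a\<in>UNIV. (vector [v$2, v$3] $ a) *\<^sub>R ?P (ix a))"
    by (simp add: sum_2 ix_def)
  show ?thesis unfolding normal_part_def
  proof (rule the_equality)
    show "(\<forall>a. ?G ?N (?P (ix a)) = 0) \<and> (\<exists>c::real^2. ?Y - ?N = (\<Sum>a\<in>UNIV. (c $ a) *\<^sub>R ?P (ix a)))"
      using orth span by blast
  next
    fix N assume asm: "(\<forall>a. ?G N (?P (ix a)) = 0) \<and> (\<exists>c::real^2. ?Y - N = (\<Sum>a\<in>UNIV. (c $ a) *\<^sub>R ?P (ix a)))"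
    then obtain c :: "real^2" where c: "?Y - N = (\<Sum>a\<in>UNIV. (c $ a) *\<^sub>R ?P (ix a))" by blast
    have o1: "?G N (?P 2) = 0" "?G N (?P 3) = 0" using asm[THEN conjunct1, rule_format, of 1] asm[THEN conjunct1, rule_format, of 2]
      by (simp_all add: ix_def)
    have o2: "?G ?N (?P 2) = 0" "?G ?N (?P 3) = 0" using orth[of 1] orth[of 2] by (simp_all add: ix_def)
    define D where "D = N - ?N"
    have Dsp: "D = (v$2 - c$1) *\<^sub>R ?P 2 + (v$3 - c$2) *\<^sub>R ?P 3"
    proof -
      have "N = ?Y - (c$1 *\<^sub>R ?P 2 + c$2 *\<^sub>R ?P 3)" using c by (simp add: sum_2 ix_def algebra_simps)
      then show ?thesis unfolding D_def by (simp add: algebra_simps)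
    qed
    have "?G D D = 0"
      apply (subst (2) Dsp)
      unfolding bm_add2 bm_scale2
      by (simp add: D_def bm_diff1 o1 o2)
    then have "D = 0" using bm_posdef[of la mu mu x D] assms by simp
    then show "N = ?N" unfolding D_def by simp
  qed
qed

lemma sframe_fun: "sframe hopf_chart (torus_param th) y = (\<lambda>a. pd hopf_chart (torus_param th y) (ix a))"
  by (rule ext) (simp add: sframe_eq)

definition kap :: "real \<Rightarrow> real \<Rightarrow> real \<Rightarrow> 2 \<Rightarrow> 2 \<Rightarrow> real" where
  "kap la mu th a b = - gdfun la mu th (ix a) (ix b) / (2 * mu^2)"

lemma sff_eq:
  assumes "la > 0" "mu > 0" "sin th \<noteq> 0" "cos th \<noteq> 0"
  shows "sff (berger_metric la mu mu) hopf_chart (torus_param th) y a b = kap la mu th a b *\<^sub>R pd hopf_chart (torus_param th y) 1"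
  unfolding sff_def sframe_fun push_eq normal_part_eq[OF assms(1,2)] kap_def
  using assms by (simp add: covd1)

lemma mean_curv_eq:
  assumes "la > 0" "mu > 0" "sin th \<noteq> 0" "cos th \<noteq> 0"
  shows "mean_curv (berger_metric la mu mu) hopf_chart (torus_param th) y c d =
    ((1/2) * (\<Sum>a\<in>UNIV. \<Sum>b\<in>UNIV. (c $ a * c $ b + d $ a * d $ b) * kap la mu th a b)) *\<^sub>R pd hopf_chart (torus_param th y) 1"
  unfolding mean_curv_def sff_eq[OF assms]
  by (simp add: scaleR_sum_left scaleR_right.sum sum_divide_distrib)

lemma quad: "berger_metric la mu mu (hopf_chart x) (c1 *\<^sub>R pd hopf_chart x 2 + c2 *\<^sub>R pd hopf_chart x 3) (d1 *\<^sub>R pd hopf_chart x 2 + d2 *\<^sub>R pd hopf_chart x 3)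
  = c1*d1*gfun la mu (x$1) 2 2 + (c1*d2 + c2*d1) * gfun la mu (x$1) 2 3 + c2*d2*gfun la mu (x$1) 3 3"
proof -
  have "gfun la mu (x$1) 3 2 = gfun la mu (x$1) 2 3" by (simp add: gfun_def)
  then show ?thesis by (simp add: bm_add1 bm_add2 bm_scale1 bm_scale2 gP algebra_simps)
qed

lemma Vsum: "(\<Sum>a\<in>UNIV. (c $ a) *\<^sub>R sframe hopf_chart (torus_param th) y a) =
   c$1 *\<^sub>R pd hopf_chart (torus_param th y) 2 + c$2 *\<^sub>R pd hopf_chart (torus_param th y) 3"
  by (simp add: sum_2 sframe_eq ix_def)

lemma orth_alg:
  fixes A B E c1 c2 d1 d2 Ap Bp Ep :: real
  assumes X: "c1*c1*A + (c1*c2 + c2*c1)*B + c2*c2*E = 1"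
    and Y: "d1*d1*A + (d1*d2 + d2*d1)*B + d2*d2*E = 1"
    and Z: "c1*d1*A + (c1*d2 + c2*d1)*B + c2*d2*E = 0"
  shows "(c1*d2 - c2*d1)^2 * (A*E - B^2) = 1"
    and "Ap*(c1*c1+d1*d1) + 2*Bp*(c1*c2+d1*d2) + Ep*(c2*c2+d2*d2) = (c1*d2-c2*d1)^2 * (Ap*E - 2*Bp*B + Ep*A)"
  using X Y Z by algebra+

lemma trace_id: "gdfun la mu t 2 2 * gfun la mu t 3 3 - 2 * gdfun la mu t 2 3 * gfun la mu t 2 3 + gdfun la mu t 3 3 * gfun la mu t 2 2
   = la^2 * mu^2 * (2 * sin t * cos t ^ 3 - 2 * sin t ^ 3 * cos t)"
proof -
  have h: "sin t ^2 + cos t ^2 = 1" by simp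
  show ?thesis unfolding gfun_def gdfun_def apply simp using h by algebra
qed

lemma norm_val:
  assumes la: "la > 0" and mu: "mu > 0" and th: "0 < th" "th < pi/2"
    and X: "berger_metric la mu mu (hopf_chart (torus_param th y)) (\<Sum>a\<in>UNIV. (c $ a) *\<^sub>R sframe hopf_chart (torus_param th) y a) (\<Sum>a\<in>UNIV. (c $ a) *\<^sub>R sframe hopf_chart (torus_param th) y a) = 1"
    and Y: "berger_metric la mu mu (hopf_chart (torus_param th y)) (\<Sum>a\<in>UNIV. (d $ a) *\<^sub>R sframe hopf_chart (torus_param th) y a) (\<Sum>a\<in>UNIV. (d $ a) *\<^sub>R sframe hopf_chart (torus_param th) y a) = 1"
    and Z: "berger_metric la mu mu (hopf_chart (torus_param th y)) (\<Sum>a\<in>UNIV. (c $ a) *\<^sub>R sframe hopf_chart (torus_param th) y a) (\<Sum>a\<in>UNIV. (d $ a) *\<^sub>R sframe hopf_chart (torus_param th) y a) = 0"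
  shows "sqrt (berger_metric la mu mu (hopf_chart (torus_param th y)) (mean_curv (berger_metric la mu mu) hopf_chart (torus_param th) y c d) (mean_curv (berger_metric la mu mu) hopf_chart (torus_param th) y c d))
     = \<bar>cos th ^ 2 - sin th ^ 2\<bar> / (2 * mu * sin th * cos th)"
proof -
  have s: "sin th > 0" using th by (intro sin_gt_zero) auto
  have co: "cos th > 0" using th by (intro cos_gt_zero) auto
  define A where "A = gfun la mu th 2 2"
  define B where "B = gfun la mu th 2 3"
  define E where "E = gfun la mu th 3 3"
  define Ap where "Ap = gdfun la mu th 2 2"
  define Bp where "Bp = gdfun la mu th 2 3"
  define Ep where "Ep = gdfun la mu th 3 3"
  have X': "c$1*c$1*A + (c$1*c$2 + c$2*c$1)*B + c$2*c$2*E = 1"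
    using X unfolding Vsum quad torus1 A_def B_def E_def .
  have Y': "d$1*d$1*A + (d$1*d$2 + d$2*d$1)*B + d$2*d$2*E = 1"
    using Y unfolding Vsum quad torus1 A_def B_def E_def .
  have Z': "c$1*d$1*A + (c$1*d$2 + c$2*d$1)*B + c$2*d$2*E = 0"
    using Z unfolding Vsum quad torus1 A_def B_def E_def .
  note o = orth_alg(1)[OF X' Y' Z'] orth_alg(2)[where Ap=Ap and Bp=Bp and Ep=Ep, OF X' Y' Z']
  define dl where "dl = (c$1*d$2 - c$2*d$1)^2"
  have D: "A*E - B^2 = la^2 * mu^2 * sin th ^ 2 * cos th ^ 2" unfolding A_def B_def E_def by (rule detD)
  have T: "Ap*E - 2*Bp*B + Ep*A = la^2 * mu^2 * (2 * sin th * cos th ^ 3 - 2 * sin th ^ 3 * cos th)"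
    unfolding A_def B_def E_def Ap_def Bp_def Ep_def using trace_id[of la mu th] by (simp add: algebra_simps)
  have dl: "dl = 1 / (la^2 * mu^2 * sin th ^ 2 * cos th ^ 2)" using o(1) la mu s co unfolding dl_def D
    by (simp add: field_simps)
  define K where "K = (1/2) * (\<Sum>a\<in>UNIV. \<Sum>b\<in>UNIV. (c $ a * c $ b + d $ a * d $ b) * kap la mu th a b)"
  have K1: "K = - (Ap*(c$1*c$1+d$1*d$1) + 2*Bp*(c$1*c$2+d$1*d$2) + Ep*(c$2*c$2+d$2*d$2)) / (4 * mu^2)"
  proof -
    have k: "kap la mu th 1 1 = - Ap / (2*mu^2)" "kap la mu th 1 2 = - Bp / (2*mu^2)"
      "kap la mu th 2 1 = - Bp / (2*mu^2)" "kap la mu th 2 2 = - Ep / (2*mu^2)"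
      unfolding kap_def Ap_def Bp_def Ep_def ix_def by (simp_all add: gdfun_def)
    show ?thesis unfolding K_def using mu by (simp add: sum_2 k field_simps)
  qed
  have K2: "K = - (cos th ^ 2 - sin th ^ 2) / (2 * mu^2 * sin th * cos th)"
    unfolding K1 o(2) dl_def[symmetric] dl T using la mu s co
    by (simp add: field_simps power2_eq_square power3_eq_cube)
  have H: "mean_curv (berger_metric la mu mu) hopf_chart (torus_param th) y c d = K *\<^sub>R pd hopf_chart (torus_param th y) 1"
    unfolding K_def using mean_curv_eq[OF la mu] s co by simp
  have "berger_metric la mu mu (hopf_chart (torus_param th y)) (K *\<^sub>R pd hopf_chart (torus_param th y) 1) (K *\<^sub>R pd hopf_chart (torus_param th y) 1)
     = (K * mu)^2"
    by (simp add: bm_scale1 bm_scale2 gP gfun_def power2_eq_square)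
  then have "sqrt (berger_metric la mu mu (hopf_chart (torus_param th y)) (K *\<^sub>R pd hopf_chart (torus_param th y) 1) (K *\<^sub>R pd hopf_chart (torus_param th y) 1)) = \<bar>K\<bar> * mu"
    using mu by (simp add: abs_mult)
  also have "\<bar>K\<bar> * mu = \<bar>cos th ^ 2 - sin th ^ 2\<bar> / (2 * mu * sin th * cos th)"
  proof -
    have "\<bar>K\<bar> = \<bar>cos th ^ 2 - sin th ^ 2\<bar> / (2 * mu^2 * sin th * cos th)"
      unfolding K2 using mu s co by (simp add: abs_divide abs_mult)
    then show ?thesis using mu s co by (simp add: field_simps power2_eq_square)
  qed
  finally show ?thesis unfolding H .
qed

lemma char:
  assumes la: "la > 0" and mu: "mu > 0" and th: "0 < th" "th < pi/2"
  shows "const_mean_curv_norm (berger_metric la mu mu) hopf_chart (torus_param th) C \<longleftrightarrow>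
     \<bar>cos th ^ 2 - sin th ^ 2\<bar> / (2 * mu * sin th * cos th) = C"
proof
  assume "\<bar>cos th ^ 2 - sin th ^ 2\<bar> / (2 * mu * sin th * cos th) = C"
  then show "const_mean_curv_norm (berger_metric la mu mu) hopf_chart (torus_param th) C"
    unfolding const_mean_curv_norm_def Let_def using norm_val[OF la mu th] by auto
next
  assume cm: "const_mean_curv_norm (berger_metric la mu mu) hopf_chart (torus_param th) C"
  have s: "sin th > 0" using th by (intro sin_gt_zero) auto
  have co: "cos th > 0" using th by (intro cos_gt_zero) auto
  define A where "A = gfun la mu th 2 2"
  define B where "B = gfun la mu th 2 3"
  define E where "E = gfun la mu th 3 3"
  have Apos: "A > 0" unfolding A_def gfun_def using la mu s co by (simp add: add_pos_pos)
  have Dpos: "A*E - B^2 > 0" unfolding A_def B_def E_def detD using la mu s co by simp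
  define r where "r = sqrt (A * (A*E - B^2))"
  have rpos: "r > 0" unfolding r_def using Apos Dpos by simp
  have r2: "r * r = A * (A*E - B^2)" unfolding r_def using Apos Dpos by simp
  have sa: "sqrt A * sqrt A = A" using Apos by simp
  define c :: "real^2" where "c = vector [1 / sqrt A, 0]"
  define d :: "real^2" where "d = vector [- B / r, A / r]"
  let ?y = "0 :: real^2"
  let ?G = "berger_metric la mu mu (hopf_chart (torus_param th ?y))"
  let ?V = "\<lambda>c::real^2. (\<Sum>a\<in>UNIV. (c $ a) *\<^sub>R sframe hopf_chart (torus_param th) ?y a)"
  have X: "?G (?V c) (?V c) = 1"
    unfolding Vsum quad torus1 A_def[symmetric] B_def[symmetric] E_def[symmetric] c_def
    using Apos sa by (simp add: field_simps)
  have Y: "?G (?V d) (?V d) = 1"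
    unfolding Vsum quad torus1 A_def[symmetric] B_def[symmetric] E_def[symmetric] d_def
    using rpos r2 Apos Dpos by (simp add: field_simps power2_eq_square)
  have Z: "?G (?V c) (?V d) = 0"
    unfolding Vsum quad torus1 A_def[symmetric] B_def[symmetric] E_def[symmetric] c_def d_def
    using rpos Apos by (simp add: field_simps)
  have "sqrt (?G (mean_curv (berger_metric la mu mu) hopf_chart (torus_param th) ?y c d) (mean_curv (berger_metric la mu mu) hopf_chart (torus_param th) ?y c d)) = C"
    using cm X Y Z unfolding const_mean_curv_norm_def Let_def by blast
  then show "\<bar>cos th ^ 2 - sin th ^ 2\<bar> / (2 * mu * sin th * cos th) = C"
    using norm_val[OF la mu th X Y Z] by simp
qed

lemma nf_tan:
  assumes mu: "mu > 0" and th: "0 < th" "th < pi/2"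
  shows "\<bar>cos th ^ 2 - sin th ^ 2\<bar> / (2 * mu * sin th * cos th) = \<bar>tan (pi/2 - 2*th)\<bar> / mu"
proof -
  have s: "sin th > 0" using th by (intro sin_gt_zero) auto
  have co: "cos th > 0" using th by (intro cos_gt_zero) auto
  have "tan (pi/2 - 2*th) = cos (2*th) / sin (2*th)"
    by (simp add: tan_def sin_diff cos_diff)
  also have "\<dots> = (cos th ^ 2 - sin th ^ 2) / (2 * sin th * cos th)"
    by (simp add: cos_double sin_double)
  finally have "\<bar>tan (pi/2 - 2*th)\<bar> = \<bar>cos th ^ 2 - sin th ^ 2\<bar> / (2 * sin th * cos th)"
    using s co by (simp add: abs_divide)
  then show ?thesis using mu s co by (simp add: field_simps)
qed

lemma char2:
  assumes la: "la > 0" and mu: "mu > 0"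
  shows "(th \<in> {0<..<pi/2} \<and> const_mean_curv_norm (berger_metric la mu mu) hopf_chart (torus_param th) C) \<longleftrightarrow>
     (th \<in> {0<..<pi/2} \<and> \<bar>tan (pi/2 - 2*th)\<bar> = C * mu)"
proof (cases "th \<in> {0<..<pi/2}")
  case True
  then have t: "0 < th" "th < pi/2" by auto
  have "(\<bar>tan (pi/2 - 2*th)\<bar> / mu = C) \<longleftrightarrow> (\<bar>tan (pi/2 - 2*th)\<bar> = C * mu)"
    using mu by (auto simp: field_simps)
  then show ?thesis using char[OF la mu t] nf_tan[OF mu t] True by simp
qed auto

lemma arctan_tan_range:
  assumes "th \<in> {0<..<pi/2}"
  shows "arctan (tan (pi/2 - 2*th)) = pi/2 - 2*th"
  using assms by (intro arctan_tan) auto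



lemma main_aux:
  fixes la mu C :: real
  assumes "la > 0" and "mu > 0" and "C \<ge> 0"
  shows "(C = 0 \<longrightarrow> (\<exists>!theta. theta \<in> {0<..<pi/2} \<and>
            const_mean_curv_norm (berger_metric la mu mu) hopf_chart (torus_param theta) C))
       \<and> (C > 0 \<longrightarrow> card {theta \<in> {0<..<pi/2}.
            const_mean_curv_norm (berger_metric la mu mu) hopf_chart (torus_param theta) C} = 2)"
proof -
  note S = char2[OF assms(1,2), of _ C]
  show ?thesis
  proof (intro conjI impI)
    assume C0: "C = 0"
    show "\<exists>!theta. theta \<in> {0<..<pi/2} \<and>
            const_mean_curv_norm (berger_metric la mu mu) hopf_chart (torus_param theta) C"
    proof (rule ex1I[of _ "pi/4"])
      show "pi/4 \<in> {0<..<pi/2} \<and> const_mean_curv_norm (berger_metric la mu mu) hopf_chart (torus_param (pi/4)) C"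
        unfolding S using C0 by auto
    next
      fix th assume "th \<in> {0<..<pi/2} \<and> const_mean_curv_norm (berger_metric la mu mu) hopf_chart (torus_param th) C"
      then have th: "th \<in> {0<..<pi/2}" and t: "tan (pi/2 - 2*th) = 0" unfolding S using C0 by auto
      have "arctan 0 = pi/2 - 2*th" using arctan_tan_range[OF th] unfolding t .
      then show "th = pi/4" by simp
    qed
  next
    assume Cp: "C > 0"
    define k where "k = C * mu"
    have kp: "k > 0" unfolding k_def using Cp assms(2) by simp
    have ak: "0 < arctan k" using kp by simp
    have eq: "{theta \<in> {0<..<pi/2}. const_mean_curv_norm (berger_metric la mu mu) hopf_chart (torus_param theta) C}
       = {(pi/2 - arctan k)/2, (pi/2 + arctan k)/2}"
    proof (intro set_eqI iffI)
      fix th assume "th \<in> {theta \<in> {0<..<pi/2}. const_mean_curv_norm (berger_metric la mu mu) hopf_chart (torus_param theta) C}"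
      then have th: "th \<in> {0<..<pi/2}" and t: "\<bar>tan (pi/2 - 2*th)\<bar> = k" using S k_def by auto
      then have "tan (pi/2 - 2*th) = k \<or> tan (pi/2 - 2*th) = -k" by auto
      then have "arctan k = pi/2 - 2*th \<or> arctan (-k) = pi/2 - 2*th"
        using arctan_tan_range[OF th] by metis
      then show "th \<in> {(pi/2 - arctan k)/2, (pi/2 + arctan k)/2}"
        unfolding arctan_minus by auto
    next
      fix th assume "th \<in> {(pi/2 - arctan k)/2, (pi/2 + arctan k)/2}"
      moreover have "(pi/2 - arctan k)/2 \<in> {0<..<pi/2}" "(pi/2 + arctan k)/2 \<in> {0<..<pi/2}"
        using arctan_lbound[of k] arctan_ubound[of k] by auto
      moreover have "\<bar>tan (pi/2 - 2*((pi/2 - arctan k)/2))\<bar> = k" "\<bar>tan (pi/2 - 2*((pi/2 + arctan k)/2))\<bar> = k"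
      proof -
        have e1: "pi/2 - 2*((pi/2 - arctan k)/2) = arctan k" by (simp add: field_simps)
        have e2: "pi/2 - 2*((pi/2 + arctan k)/2) = - arctan k" by (simp add: field_simps)
        show "\<bar>tan (pi/2 - 2*((pi/2 - arctan k)/2))\<bar> = k" "\<bar>tan (pi/2 - 2*((pi/2 + arctan k)/2))\<bar> = k"
          unfolding e1 e2 using kp by (simp_all add: tan_arctan)
      qed
      ultimately have "th \<in> {0<..<pi/2} \<and> \<bar>tan (pi/2 - 2*th)\<bar> = C * mu" unfolding k_def by blast
      then show "th \<in> {theta \<in> {0<..<pi/2}. const_mean_curv_norm (berger_metric la mu mu) hopf_chart (torus_param theta) C}"
        using S[of th] by simp
    qed
    show "card {theta \<in> {0<..<pi/2}. const_mean_curv_norm (berger_metric la mu mu) hopf_chart (torus_param theta) C} = 2"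
      unfolding eq using ak by simp
  qed
qed

theorem mainTheorem3:
  fixes la mu nu C :: real
  assumes "la > 0" and "mu > 0" and "nu = mu" and "C \<ge> 0"
  shows "(C = 0 \<longrightarrow> (\<exists>!theta. theta \<in> {0<..<pi/2} \<and>
            const_mean_curv_norm (berger_metric la mu nu) hopf_chart (torus_param theta) C))
       \<and> (C > 0 \<longrightarrow> card {theta \<in> {0<..<pi/2}.
            const_mean_curv_norm (berger_metric la mu nu) hopf_chart (torus_param theta) C} = 2)"
  unfolding assms(3) by (rule main_aux[OF assms(1,2,4)])

end
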